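(* Let $(\mathbf k((G)),l)$ be a series field with prelogarithmic section and $\psi$ a morphism from $(\mathbf k((G)),l)$ to itself. Let $U\subseteq H$ be subgroups of $G$ satisfying $(\dagger)$: $\mathrm{Log}(h)<|f|$ for all $h\in H$ and all nonzero $f\in\mathbf k((H^{>U}))$. Then $\psi(U)\subseteq\psi(H)$ also satisfy $(\dagger)$, i.e. $\mathrm{Log}(h_1)<|f_1|$ for all $h_1\in\psi(H)$ and all nonzero $f_1\in\mathbf k((\psi(H)^{>\psi(U)}))$.
   Context: Let $\mathbf k$ be an ordered field and $(G,\cdot,<)$ a totally ordered abelian group (written multiplicatively). $\mathbf k((G))$ denotes the field of generalized power series $\alpha=\sum_{g\in G}\alpha(g)\,g$ ($\alpha(g)\in\mathbf k$) with anti-well-ordered support, usual operations, canonical valuation $v(\alpha)=\max\operatorname{supp}\alpha$ and ordering $\alpha>0$ iff $\alpha(v(\alpha))>0$. For $S\subseteq G$, $\mathbf k((S))=\{\alpha:\operatorname{supp}\alpha\subseteq S\}$; for a subgroup $H$ and $A\subseteq G$, $H^{>A}=\{h\in H:h>a\ \forall a\in A\}$. A prelogarithmic section is an order-preserving group embedding $l:(G,\cdot)\to(\mathbf k((G^{>1})),+)$ (with $G^{>1}=\{g>1\}$). For $g\in G$, $\mathrm{Log}(g)=l(g)$ ($\mathrm{Log}$ being the logarithm of the EL-series field $\mathbf k((G))^{EL}$, which extends $l$). An order-preserving group embedding $\psi:G\to G$, extended to $\mathbf k((G))$ by $\psi(\sum a_gg)=\sum a_g\psi(g)$, is a morphism of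 $(\mathbf k((G)),l)$ to itself if $\psi\circ l=l\circ\psi$ on $G$. *)

theory Defs
  imports Main
begin

text \<open>The ordered abelian group G is written
additively (type class linordered_ab_group_add): the group unit 1 of the paper is 0,
products g*h are g+h and G^{>1} is {g. g > 0}.\<close>

definition supp :: "('g \<Rightarrow> 'k::zero) \<Rightarrow> 'g set" where
  "supp a = {g. a g \<noteq> 0}"

definition anti_wellordered :: "'g::linorder set \<Rightarrow> bool" where
  "anti_wellordered S \<longleftrightarrow> wf {(x, y). x \<in> S \<and> y \<in> S \<and> y < x}"

definition series_on :: "'g::linorder set \<Rightarrow> ('g \<Rightarrow> 'k::zero) set" where
  "series_on S = {a. anti_wellordered (supp a) \<and> supp a \<subseteq> S}"

definition val :: "('g::linorder \<Rightarrow> 'k::zero) \<Rightarrow> 'g" where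
  "val a = (GREATEST g. a g \<noteq> 0)"

definition series_pos :: "('g::linorder \<Rightarrow> 'k::linordered_field) \<Rightarrow> bool" where
  "series_pos a \<longleftrightarrow> a \<noteq> (\<lambda>_. 0) \<and> a (val a) > 0"

definition series_less :: "('g::linorder \<Rightarrow> 'k::linordered_field) \<Rightarrow> ('g \<Rightarrow> 'k) \<Rightarrow> bool" where
  "series_less a b \<longleftrightarrow> series_pos (\<lambda>g. b g - a g)"

definition series_abs :: "('g::linorder \<Rightarrow> 'k::linordered_field) \<Rightarrow> ('g \<Rightarrow> 'k)" where
  "series_abs a = (if series_pos (\<lambda>g. - a g) then (\<lambda>g. - a g) else a)"

definition add_subgroup :: "'g::ab_group_add set \<Rightarrow> bool" where
  "add_subgroup H \<longleftrightarrow> 0 \<in> H \<and> (\<forall>x\<in>H. \<forall>y\<in>H. x + y \<in> H) \<and> (\<forall>x\<in>H. - x \<in> H)"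

definition above :: "'g::linorder set \<Rightarrow> 'g set \<Rightarrow> 'g set" where
  "above H A = {h \<in> H. \<forall>a\<in>A. a < h}"

definition prelog_section :: "('g::linordered_ab_group_add \<Rightarrow> ('g \<Rightarrow> 'k::linordered_field)) \<Rightarrow> bool" where
  "prelog_section l \<longleftrightarrow>
     (\<forall>g. l g \<in> series_on {x. 0 < x}) \<and>
     (\<forall>g h. l (g + h) = (\<lambda>x. l g x + l h x)) \<and>
     (\<forall>g h. g < h \<longrightarrow> series_less (l g) (l h))"

definition ordered_group_embedding :: "('g::linordered_ab_group_add \<Rightarrow> 'g) \<Rightarrow> bool" where
  "ordered_group_embedding \<psi> \<longleftrightarrow> (\<forall>g h. \<psi> (g + h) = \<psi> g + \<psi> h) \<and> strict_mono \<psi>"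

text \<open>extension of psi to series: psi(sum a_g g) = sum a_g psi(g)\<close>
definition series_map :: "('g \<Rightarrow> 'g) \<Rightarrow> ('g \<Rightarrow> 'k::zero) \<Rightarrow> ('g \<Rightarrow> 'k)" where
  "series_map \<psi> a = (\<lambda>x. if x \<in> range \<psi> then a (inv \<psi> x) else 0)"

definition morphism :: "('g::linordered_ab_group_add \<Rightarrow> ('g \<Rightarrow> 'k::linordered_field)) \<Rightarrow> ('g \<Rightarrow> 'g) \<Rightarrow> bool" where
  "morphism l \<psi> \<longleftrightarrow> ordered_group_embedding \<psi> \<and> (\<forall>g. series_map \<psi> (l g) = l (\<psi> g))"

text \<open>condition (dagger) for subgroups U \<subseteq> H; Log(h) = l(h) for h in G\<close>
definition dagger :: "('g::linordered_ab_group_add \<Rightarrow> ('g \<Rightarrow> 'k::linordered_field)) \<Rightarrow> 'g set \<Rightarrow> 'g set \<Rightarrow> bool" where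
  "dagger l U H \<longleftrightarrow> (\<forall>h\<in>H. \<forall>f \<in> series_on (above H U). f \<noteq> (\<lambda>_. 0) \<longrightarrow> series_less (l h) (series_abs f))"

end

theory Submission
  imports Defs
begin

lemma aw_iff:
  "anti_wellordered (S::'g::linorder set) \<longleftrightarrow> (\<forall>Q\<subseteq>S. Q \<noteq> {} \<longrightarrow> (\<exists>m\<in>Q. \<forall>y\<in>Q. y \<le> m))"
proof
  assume "anti_wellordered S"
  then have w: "wf {(x, y). x \<in> S \<and> y \<in> S \<and> y < x}" by (simp add: anti_wellordered_def)
  show "\<forall>Q\<subseteq>S. Q \<noteq> {} \<longrightarrow> (\<exists>m\<in>Q. \<forall>y\<in>Q. y \<le> m)"
  proof (intro allI impI)
    fix Q assume Q: "Q \<subseteq> S" "Q \<noteq> {}"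
    then obtain x where "x \<in> Q" by blast
    from w[unfolded wf_eq_minimal, rule_format, OF this] obtain z where
      z: "z \<in> Q" "\<forall>y. (y, z) \<in> {(x, y). x \<in> S \<and> y \<in> S \<and> y < x} \<longrightarrow> y \<notin> Q" by blast
    have "\<forall>y\<in>Q. y \<le> z"
    proof
      fix y assume "y \<in> Q"
      with z Q show "y \<le> z" by (metis (mono_tags, lifting) case_prodI mem_Collect_eq not_le_imp_less subsetD)
    qed
    with z show "\<exists>m\<in>Q. \<forall>y\<in>Q. y \<le> m" by blast
  qed
next
  assume H: "\<forall>Q\<subseteq>S. Q \<noteq> {} \<longrightarrow> (\<exists>m\<in>Q. \<forall>y\<in>Q. y \<le> m)"
  show "anti_wellordered S"
    unfolding anti_wellordered_def wf_eq_minimal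
  proof (intro allI impI)
    fix Q :: "'g set" and x assume x: "x \<in> Q"
    show "\<exists>z\<in>Q. \<forall>y. (y, z) \<in> {(x, y). x \<in> S \<and> y \<in> S \<and> y < x} \<longrightarrow> y \<notin> Q"
    proof (cases "Q \<inter> S = {}")
      case True then show ?thesis using x by auto
    next
      case False
      then obtain m where m: "m \<in> Q \<inter> S" "\<forall>y\<in>Q \<inter> S. y \<le> m" using H by (meson inf_le2)
      then show ?thesis by (metis (no_types, lifting) Int_iff case_prodD leD mem_Collect_eq)
    qed
  qed
qed

lemma has_max_union:
  fixes A B S :: "'g::linorder set"
  assumes "anti_wellordered A" "anti_wellordered B" "S \<subseteq> A \<union> B" "S \<noteq> {}"
  shows "\<exists>m\<in>S. \<forall>y\<in>S. y \<le> m"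
proof -
  have a: "\<forall>Q\<subseteq>A. Q \<noteq> {} \<longrightarrow> (\<exists>m\<in>Q. \<forall>y\<in>Q. y \<le> m)" using assms(1) aw_iff by blast
  have b: "\<forall>Q\<subseteq>B. Q \<noteq> {} \<longrightarrow> (\<exists>m\<in>Q. \<forall>y\<in>Q. y \<le> m)" using assms(2) aw_iff by blast
  show ?thesis
  proof (cases "S \<inter> A = {}")
    case True
    then have "S \<subseteq> B" using assms(3) by blast
    then show ?thesis using b assms(4) by blast
  next
    case F1: False
    then obtain m1 where m1: "m1 \<in> S \<inter> A" "\<forall>y\<in>S \<inter> A. y \<le> m1" using a by (meson inf_le2)
    show ?thesis
    proof (cases "S \<inter> B = {}")
      case True
      then have "S \<subseteq> A" using assms(3) by blast
      then show ?thesis using a assms(4) by blast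
    next
      case False
      then obtain m2 where m2: "m2 \<in> S \<inter> B" "\<forall>y\<in>S \<inter> B. y \<le> m2" using b by (meson inf_le2)
      have "\<forall>y\<in>S. y \<le> max m1 m2" using m1 m2 assms(3) by (metis IntI Un_iff le_max_iff_disj subsetD)
      then show ?thesis using m1 m2 by (metis IntE max_def)
    qed
  qed
qed

lemma map_zero: "series_map \<psi> (\<lambda>_. 0) = (\<lambda>_. 0)"
  by (auto simp: series_map_def)

lemma map_neg: "series_map \<psi> (\<lambda>g. - (a::'g \<Rightarrow> 'k::ab_group_add) g) = (\<lambda>x. - series_map \<psi> a x)"
  by (auto simp: series_map_def)

lemma map_diff: "series_map \<psi> (\<lambda>g. (a::'g \<Rightarrow> 'k::ab_group_add) g - b g) = (\<lambda>x. series_map \<psi> a x - series_map \<psi> b x)"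
  by (auto simp: series_map_def)

lemma pos_map:
  fixes d :: "'g::linorder \<Rightarrow> 'k::linordered_field"
  assumes sm: "strict_mono \<psi>"
    and ex: "d = (\<lambda>_. 0) \<or> (\<exists>m. d m \<noteq> 0 \<and> (\<forall>y. d y \<noteq> 0 \<longrightarrow> y \<le> m))"
  shows "series_pos (series_map \<psi> d) = series_pos d"
proof (cases "d = (\<lambda>_. 0)")
  case True then show ?thesis by (simp add: map_zero series_pos_def)
next
  case False
  then obtain m where m: "d m \<noteq> 0" "\<forall>y. d y \<noteq> 0 \<longrightarrow> y \<le> m" using ex by blast
  have inj: "inj \<psi>" using sm by (simp add: strict_mono_imp_inj_on)
  have iv: "\<And>y. inv \<psi> (\<psi> y) = y" using inj by simp
  have vd: "val d = m" unfolding val_def using m by (intro Greatest_equality) auto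
  have md: "series_map \<psi> d (\<psi> m) = d m" by (simp add: series_map_def iv)
  have vm: "val (series_map \<psi> d) = \<psi> m" unfolding val_def
  proof (rule Greatest_equality)
    show "series_map \<psi> d (\<psi> m) \<noteq> 0" using md m by simp
  next
    fix x assume "series_map \<psi> d x \<noteq> 0"
    then obtain y where y: "x = \<psi> y" "d y \<noteq> 0" by (auto simp: series_map_def iv split: if_splits)
    then show "x \<le> \<psi> m" using m sm by (simp add: strict_mono_less_eq)
  qed
  have nz: "series_map \<psi> d \<noteq> (\<lambda>_. 0)" using md m by (metis)
  show ?thesis using False nz vd vm md by (simp add: series_pos_def)
qed

lemma supp_abs: "supp (series_abs a) = supp a"
  by (auto simp: series_abs_def supp_def)

lemma abs_map:
  fixes a :: "'g::linorder \<Rightarrow> 'k::linordered_field"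
  assumes sm: "strict_mono \<psi>"
    and ex: "a = (\<lambda>_. 0) \<or> (\<exists>m. a m \<noteq> 0 \<and> (\<forall>y. a y \<noteq> 0 \<longrightarrow> y \<le> m))"
  shows "series_abs (series_map \<psi> a) = series_map \<psi> (series_abs a)"
proof -
  have "series_pos (series_map \<psi> (\<lambda>g. - a g)) = series_pos (\<lambda>g. - a g)"
    by (rule pos_map[OF sm]) (use ex in \<open>auto simp: fun_eq_iff\<close>)
  then show ?thesis unfolding series_abs_def map_neg by (auto simp: map_neg)
qed

theorem lemma8:
  fixes l :: "'g::linordered_ab_group_add \<Rightarrow> ('g \<Rightarrow> 'k::linordered_field)"
    and \<psi> :: "'g \<Rightarrow> 'g" and U H :: "'g set"
  assumes "prelog_section l"
    and "morphism l \<psi>"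
    and "add_subgroup U" and "add_subgroup H" and "U \<subseteq> H"
    and "dagger l U H"
  shows "dagger l (\<psi> ` U) (\<psi> ` H)"
  unfolding dagger_def
proof (intro ballI impI)
  have sm: "strict_mono \<psi>" using assms(2) by (simp add: morphism_def ordered_group_embedding_def)
  have inj: "inj \<psi>" using sm by (simp add: strict_mono_imp_inj_on)
  have iv: "\<And>y. inv \<psi> (\<psi> y) = y" using inj by simp
  fix h1 and f1 :: "'g \<Rightarrow> 'k" assume h1: "h1 \<in> \<psi> ` H" and f1: "f1 \<in> series_on (above (\<psi> ` H) (\<psi> ` U))"
    and nz1: "f1 \<noteq> (\<lambda>_. 0)"
  obtain h where h: "h \<in> H" "h1 = \<psi> h" using h1 by blast
  define f where "f = (\<lambda>g. f1 (\<psi> g))"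
  have aw1: "anti_wellordered (supp f1)" and ss1: "supp f1 \<subseteq> above (\<psi> ` H) (\<psi> ` U)"
    using f1 by (auto simp: series_on_def)
  have f1f: "f1 = series_map \<psi> f"
  proof
    fix x show "f1 x = series_map \<psi> f x"
    proof (cases "x \<in> range \<psi>")
      case True then show ?thesis by (auto simp: series_map_def f_def iv)
    next
      case False
      then have "x \<notin> supp f1" using ss1 by (auto simp: above_def)
      then show ?thesis using False by (simp add: supp_def series_map_def)
    qed
  qed
  have awf: "anti_wellordered (supp f)"
    unfolding aw_iff
  proof (intro allI impI)
    fix Q assume Q: "Q \<subseteq> supp f" "Q \<noteq> {}"
    have "\<psi> ` Q \<subseteq> supp f1" using Q by (auto simp: supp_def f_def)
    then obtain m where m: "m \<in> \<psi> ` Q" "\<forall>y\<in>\<psi> ` Q. y \<le> m" using aw1[unfolded aw_iff, rule_format, of "\<psi> ` Q"] Q by blast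
    then obtain q where q: "q \<in> Q" "m = \<psi> q" by blast
    have "\<forall>y\<in>Q. y \<le> q" using m q sm by (simp add: strict_mono_less_eq)
    then show "\<exists>m\<in>Q. \<forall>y\<in>Q. y \<le> m" using q by blast
  qed
  have ssf: "supp f \<subseteq> above H U"
  proof
    fix g assume "g \<in> supp f"
    then have "\<psi> g \<in> above (\<psi> ` H) (\<psi> ` U)" using ss1 by (auto simp: supp_def f_def)
    then have "\<psi> g \<in> \<psi> ` H" "\<forall>u\<in>U. \<psi> u < \<psi> g" by (auto simp: above_def)
    moreover have "\<forall>u\<in>U. u < g" using calculation(2) sm by (simp add: strict_mono_less)
    ultimately show "g \<in> above H U" using inj by (simp add: above_def inj_image_mem_iff)
  qed
  have fin: "f \<in> series_on (above H U)" using awf ssf by (simp add: series_on_def)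
  have nzf: "f \<noteq> (\<lambda>_. 0)" proof
    assume "f = (\<lambda>_. 0)"
    then have "f1 = (\<lambda>_. 0)" using f1f map_zero by simp
    then show False using nz1 by simp
  qed
  have less: "series_less (l h) (series_abs f)" using assms(6) h fin nzf by (simp add: dagger_def)
  have awl: "anti_wellordered (supp (l h))" using assms(1) by (simp add: prelog_section_def series_on_def)
  have lm: "l h1 = series_map \<psi> (l h)" using assms(2) h by (simp add: morphism_def)
  have exf: "f = (\<lambda>_. 0) \<or> (\<exists>m. f m \<noteq> 0 \<and> (\<forall>y. f y \<noteq> 0 \<longrightarrow> y \<le> m))"
  proof -
    have "supp f \<noteq> {}" using nzf by (auto simp: supp_def)
    then obtain m where "m \<in> supp f" "\<forall>y\<in>supp f. y \<le> m" using awf[unfolded aw_iff, rule_format, of "supp f"] by blast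
    then show ?thesis by (auto simp: supp_def)
  qed
  define d where "d = (\<lambda>g. series_abs f g - l h g)"
  have exd: "d = (\<lambda>_. 0) \<or> (\<exists>m. d m \<noteq> 0 \<and> (\<forall>y. d y \<noteq> 0 \<longrightarrow> y \<le> m))"
  proof (cases "supp d = {}")
    case True then show ?thesis by (auto simp: supp_def)
  next
    case False
    have "supp d \<subseteq> supp f \<union> supp (l h)"
    proof
      fix x assume "x \<in> supp d"
      then have "series_abs f x \<noteq> 0 \<or> l h x \<noteq> 0" by (auto simp: supp_def d_def)
      moreover have "series_abs f x \<noteq> 0 \<Longrightarrow> f x \<noteq> 0" by (auto simp: series_abs_def split: if_splits)
      ultimately show "x \<in> supp f \<union> supp (l h)" by (auto simp: supp_def)
    qed
    then obtain m where "m \<in> supp d" "\<forall>y\<in>supp d. y \<le> m"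
      using has_max_union[OF awf awl _ False] by blast
    then show ?thesis by (auto simp: supp_def)
  qed
  have "series_abs f1 = series_map \<psi> (series_abs f)" using f1f abs_map[OF sm exf] by simp
  then have "(\<lambda>g. series_abs f1 g - l h1 g) = series_map \<psi> d"
    using lm by (simp add: d_def map_diff)
  then show "series_less (l h1) (series_abs f1)"
    using less pos_map[OF sm exd] by (simp add: series_less_def d_def)
qed

end
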